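(* Let $(X,T)$ be a topological dynamical system and $x\in X$. Then for every non-atomic $T$-invariant Borel probability measure $\mu$ on $X$, $\mu(BP(x))=0$, where $BP(x)=\{y\in X:(x,y)\text{ is Banach proximal}\}$.
   Context: A topological dynamical system $(X,T)$ consists of a non-empty compact metric space $(X,d)$ and a continuous map $T:X\to X$. A measure $\mu$ is non-atomic if $\mu(\{z\})=0$ for every $z\in X$. A set $F\subset\mathbb{Z}_+$ has Banach density one if for every $\lambda<1$ there is $N\ge1$ with $\#(F\cap I)\ge\lambda\,\#(I)$ for every interval of integers $I\subset\mathbb{Z}_+$ with $\#(I)\ge N$. A pair $(x,y)$ is Banach proximal if for every $\varepsilon>0$ the set $\{n\in\mathbb{Z}_+: d(T^nx,T^ny)<\varepsilon\}$ has Banach density one. *)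

theory Defs
  imports "HOL-Probability.Probability"
begin

definition banach_density_one :: "nat set \<Rightarrow> bool" where
  "banach_density_one F \<longleftrightarrow>
     (\<forall>lam::real. lam < 1 \<longrightarrow>
        (\<exists>N::nat. N \<ge> 1 \<and>
           (\<forall>a k::nat. k \<ge> N \<longrightarrow>
              real (card (F \<inter> {a..<a+k})) \<ge> lam * real k)))"

definition banach_proximal :: "('a::metric_space \<Rightarrow> 'a) \<Rightarrow> 'a \<Rightarrow> 'a \<Rightarrow> bool" where
  "banach_proximal T x y \<longleftrightarrow>
     (\<forall>\<epsilon>>0. banach_density_one {n. dist ((T ^^ n) x) ((T ^^ n) y) < \<epsilon>})"

definition BP :: "('a::metric_space \<Rightarrow> 'a) \<Rightarrow> 'a \<Rightarrow> 'a set" where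
  "BP T x = {y. banach_proximal T x y}"

end

theory Submission
  imports Defs
begin

lemma funpow_cont:
  fixes T :: "'a::topological_space \<Rightarrow> 'a"
  assumes "continuous_on UNIV T" shows "continuous_on UNIV (T^^n)"
proof (induction n)
  case 0
  have "T^^0 = id" by (simp add: fun_eq_iff)
  then show ?case by simp
next
  case (Suc n)
  have "continuous_on UNIV (T \<circ> T^^n)"
    by (rule continuous_on_compose[OF Suc]) (rule continuous_on_subset[OF assms], simp)
  then show ?case by simp
qed

lemma dist_meas:
  fixes T :: "'a::metric_space \<Rightarrow> 'a"
  assumes "continuous_on UNIV T"
  shows "(\<lambda>y. dist ((T^^n) x) ((T^^n) y)) \<in> borel_measurable borel"
  by (rule borel_measurable_continuous_onI)
     (intro continuous_on_dist continuous_on_const funpow_cont[OF assms])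

lemma card_sum:
  assumes "finite I"
  shows "real (card ({n. P n} \<inter> I)) = (\<Sum>n\<in>I. if P n then 1 else 0)"
proof -
  have "{n. P n} \<inter> I = {n\<in>I. P n}" by auto
  then show ?thesis using assms by (simp add: sum.inter_filter[symmetric])
qed

lemma card_meas:
  fixes T :: "'a::metric_space \<Rightarrow> 'a"
  assumes "continuous_on UNIV T" "finite I"
  shows "{y. c \<le> real (card ({n. dist ((T^^n) x) ((T^^n) y) < e} \<inter> I))} \<in> sets borel"
proof -
  have m[measurable]: "\<And>n. (\<lambda>y. dist ((T^^n) x) ((T^^n) y)) \<in> borel_measurable borel"
    by (rule dist_meas[OF assms(1)])
  have "(\<lambda>y. \<Sum>n\<in>I. if dist ((T^^n) x) ((T^^n) y) < e then 1 else (0::real)) \<in> borel_measurable borel"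
    by measurable
  then have "{y. c \<le> (\<Sum>n\<in>I. if dist ((T^^n) x) ((T^^n) y) < e then 1 else (0::real))} \<in> sets borel"
    by measurable
  then show ?thesis by (simp add: card_sum[OF assms(2)])
qed

lemma uniform_small:
  fixes \<mu> :: "'a::metric_space measure"
  assumes "compact (UNIV :: 'a set)" "finite_measure \<mu>" "sets \<mu> = sets borel"
    "\<And>z. measure \<mu> {z} = 0" "\<delta> > 0"
  shows "\<exists>\<epsilon>>0. \<forall>z. measure \<mu> (ball z \<epsilon>) \<le> \<delta>"
proof -
  interpret finite_measure \<mu> by fact
  have "\<exists>r>0. measure \<mu> (ball z r) < \<delta>" for z
  proof -
    let ?A = "\<lambda>n. ball z (1 / real (Suc n))"
    have dec: "decseq ?A"
      proof (rule decseq_SucI, rule subset_ball)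
      fix n :: nat
      show "1 / real (Suc (Suc n)) \<le> 1 / real (Suc n)"
        by (rule divide_left_mono) auto
    qed
    have rng: "range ?A \<subseteq> sets \<mu>" unfolding assms(3) by (auto intro!: borel_open)
    have int: "(\<Inter>n. ?A n) = {z}"
    proof safe
      fix w assume w: "w \<in> (\<Inter>n. ?A n)"
      show "w = z"
      proof (rule ccontr)
        assume "w \<noteq> z"
        then have "dist z w > 0" by simp
        then obtain n where "inverse (real (Suc n)) < dist z w"
          using reals_Archimedean by blast
        moreover have "dist z w < 1 / real (Suc n)" using w by auto
        ultimately show False by (simp add: inverse_eq_divide)
      qed
    qed simp
    have "(\<lambda>n. measure \<mu> (?A n)) \<longlonglongrightarrow> 0"
      using finite_Lim_measure_decseq[OF rng dec] int assms(4) by simp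
    then have "eventually (\<lambda>n. measure \<mu> (?A n) < \<delta>) sequentially"
      using assms(5) by (rule order_tendstoD(2))
    then obtain n where "measure \<mu> (?A n) < \<delta>" by (auto simp: eventually_sequentially)
    then show ?thesis by (intro exI[of _ "1 / real (Suc n)"] conjI) simp_all
  qed
  then have "\<forall>z. \<exists>r. r > 0 \<and> measure \<mu> (ball z r) < \<delta>" by blast
  then obtain r where r0: "\<forall>z. r z > 0 \<and> measure \<mu> (ball z (r z)) < \<delta>"
    using choice[of "\<lambda>z r. r > 0 \<and> measure \<mu> (ball z r) < \<delta>"] by blast
  have r: "\<And>z. r z > 0" "\<And>z. measure \<mu> (ball z (r z)) < \<delta>" using r0 by auto
  have cov: "(UNIV::'a set) \<subseteq> (\<Union>z\<in>UNIV. ball z (r z / 2))"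
    using r(1) by auto
  obtain K where K: "finite K" "(UNIV::'a set) \<subseteq> (\<Union>z\<in>K. ball z (r z / 2))"
    by (rule compactE_image[OF assms(1) _ cov]) auto
  have Kne: "K \<noteq> {}" using K(2) by auto
  define \<epsilon> where "\<epsilon> = Min ((\<lambda>z. r z / 2) ` K)"
  have epos: "\<epsilon> > 0" unfolding \<epsilon>_def using K(1) Kne r(1) by (subst Min_gr_iff) auto
  have "measure \<mu> (ball w \<epsilon>) \<le> \<delta>" for w
  proof -
    have "w \<in> (\<Union>z\<in>K. ball z (r z / 2))" using K(2) by blast
    then obtain z where z1: "z \<in> K" and z2: "w \<in> ball z (r z / 2)" by blast
    have z: "z \<in> K" "dist z w < r z / 2" using z1 z2 by simp_all
    have le: "\<epsilon> \<le> r z / 2" unfolding \<epsilon>_def by (rule Min_le) (simp_all add: K(1) z(1))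
    have "ball w \<epsilon> \<subseteq> ball z (r z)"
    proof
      fix v assume "v \<in> ball w \<epsilon>"
      then have "dist w v < \<epsilon>" by simp
      then have "dist z v < r z" using z(2) le dist_triangle[of z v w] by linarith
      then show "v \<in> ball z (r z)" by simp
    qed
    then have "measure \<mu> (ball w \<epsilon>) \<le> measure \<mu> (ball z (r z))"
      by (rule finite_measure_mono) (simp only: assms(3), rule borel_open, simp)
    then show ?thesis using r(2)[of z] by linarith
  qed
  then show ?thesis using epos by blast
qed


theorem mainTheorem14:
  fixes T :: "'a::metric_space \<Rightarrow> 'a" and x :: 'a and \<mu> :: "'a measure"
  assumes "compact (UNIV :: 'a set)"
    and "continuous_on UNIV T"
    and "prob_space \<mu>"
    and "sets \<mu> = sets borel"
    and "\<And>A. A \<in> sets borel \<Longrightarrow> measure \<mu> (T -` A) = measure \<mu> A"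
    and "\<And>z. measure \<mu> {z} = 0"
  shows "BP T x \<in> sets \<mu> \<and> measure \<mu> (BP T x) = 0"
proof -
  interpret prob_space \<mu> by fact
  have fm: "finite_measure \<mu>" using assms(3) by (simp add: prob_space_def)
  have sp: "space \<mu> = UNIV" using sets_eq_imp_space_eq[OF assms(4)] by simp
  define S where "S e y = {n. dist ((T^^n) x) ((T^^n) y) < e}" for e y
  have Sm: "{y. c \<le> real (card (S e y \<inter> I))} \<in> sets borel" if "finite I" for c e I
    unfolding S_def by (rule card_meas[OF assms(2) that])
  have U: "UNIV \<in> sets borel" by (metis space_borel sets.top)
  define P where "P m j y \<longleftrightarrow> (\<exists>N::nat. 1 \<le> N \<and> (\<forall>a k::nat. N \<le> k \<longrightarrow>
      (1 - 1 / real (Suc j)) * real k \<le> real (card (S (1 / real (Suc m)) y \<inter> {a..<a+k}))))"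
    for m j :: nat and y
  have Pm: "{y. P m j y} \<in> sets borel" for m j
  proof -
    let ?Q = "\<lambda>a k. {y. (1 - 1 / real (Suc j)) * real k \<le> real (card (S (1 / real (Suc m)) y \<inter> {a..<a+k}))}"
    have eq: "{y. P m j y} = (\<Union>N\<in>{1..}. \<Inter>a\<in>UNIV. \<Inter>k\<in>{N..}. ?Q a k)"
    proof (rule set_eqI, rule iffI)
      fix y assume "y \<in> {y. P m j y}"
      then obtain N where N1: "1 \<le> N" and N2: "\<forall>a k. N \<le> k \<longrightarrow>
          (1 - 1 / real (Suc j)) * real k \<le> real (card (S (1 / real (Suc m)) y \<inter> {a..<a+k}))"
        unfolding P_def by blast
      show "y \<in> (\<Union>N\<in>{1..}. \<Inter>a\<in>UNIV. \<Inter>k\<in>{N..}. ?Q a k)"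
      proof (rule UN_I[of N])
        show "N \<in> {1..}" using N1 by simp
        show "y \<in> (\<Inter>a\<in>UNIV. \<Inter>k\<in>{N..}. ?Q a k)" using N2 by simp
      qed
    next
      fix y assume "y \<in> (\<Union>N\<in>{1..}. \<Inter>a\<in>UNIV. \<Inter>k\<in>{N..}. ?Q a k)"
      then obtain N where N1: "N \<in> {1..}" and N2: "y \<in> (\<Inter>a\<in>UNIV. \<Inter>k\<in>{N..}. ?Q a k)"
        by (rule UN_E)
      show "y \<in> {y. P m j y}" unfolding mem_Collect_eq P_def
        using N1 N2 by (intro exI[of _ N]) simp
    qed
    have q: "?Q a k \<in> sets borel" for a k by (rule Sm) simp
    have i1: "(\<Inter>k\<in>{N..}. ?Q a k) \<in> sets borel" for N a
      by (rule sets.countable_INT''[OF U], simp, rule q)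
    have i2: "(\<Inter>a\<in>UNIV. \<Inter>k\<in>{N..}. ?Q a k) \<in> sets borel" for N
      by (rule sets.countable_INT''[OF U], simp, rule i1)
    have UNm: "(\<Union>N\<in>{1..}. \<Inter>a\<in>UNIV. \<Inter>k\<in>{N..}. ?Q a k) \<in> sets borel"
      by (rule sets.countable_UN'', simp, rule i2)
    show ?thesis by (subst eq) (rule UNm)
  qed
  have BPeq: "BP T x = {y. \<forall>m j. P m j y}"
  proof safe
    fix y m j assume "y \<in> BP T x"
    then have bp: "banach_proximal T x y" by (simp add: BP_def)
    have "banach_density_one (S (1 / real (Suc m)) y)"
      using bp unfolding banach_proximal_def S_def by simp
    then have d: "\<forall>lam::real. lam < 1 \<longrightarrow> (\<exists>N::nat. N \<ge> 1 \<and> (\<forall>a k::nat. k \<ge> N \<longrightarrow>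
              real (card (S (1 / real (Suc m)) y \<inter> {a..<a+k})) \<ge> lam * real k))"
      unfolding banach_density_one_def .
    have lt: "1 - 1 / real (Suc j) < 1" by simp
    show "P m j y" unfolding P_def using d[rule_format, OF lt] .
  next
    fix y assume all: "\<forall>m j. P m j y"
    show "y \<in> BP T x" unfolding BP_def banach_proximal_def mem_Collect_eq
    proof (intro allI impI)
      fix e :: real assume e: "e > 0"
      obtain m where m: "inverse (real (Suc m)) < e" using reals_Archimedean[OF e] by blast
      show "banach_density_one {n. dist ((T ^^ n) x) ((T ^^ n) y) < e}"
        unfolding banach_density_one_def
      proof (intro allI impI)
        fix lam :: real assume lam: "lam < 1"
        obtain j where j: "inverse (real (Suc j)) < 1 - lam" using reals_Archimedean[of "1 - lam"] lam by auto
        have "P m j y" using all by simp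
        then obtain N where N1: "1 \<le> N" and N2: "\<forall>a k. N \<le> k \<longrightarrow>
          (1 - 1 / real (Suc j)) * real k \<le> real (card (S (1 / real (Suc m)) y \<inter> {a..<a+k}))"
          unfolding P_def by blast
        have "\<forall>a k. N \<le> k \<longrightarrow> lam * real k \<le> real (card ({n. dist ((T ^^ n) x) ((T ^^ n) y) < e} \<inter> {a..<a + k}))"
        proof (intro allI impI)
          fix a k :: nat assume k: "N \<le> k"
          have sub: "S (1 / real (Suc m)) y \<inter> {a..<a+k} \<subseteq> {n. dist ((T ^^ n) x) ((T ^^ n) y) < e} \<inter> {a..<a + k}"
          proof -
            have lt: "\<And>d::real. d < 1 / real (Suc m) \<Longrightarrow> d < e"
              using m by (metis inverse_eq_divide less_trans)
            show ?thesis unfolding S_def using lt by auto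
          qed
          have cm: "card (S (1 / real (Suc m)) y \<inter> {a..<a+k}) \<le> card ({n. dist ((T ^^ n) x) ((T ^^ n) y) < e} \<inter> {a..<a + k})"
            by (rule card_mono[OF _ sub]) simp
          have lm: "lam * real k \<le> (1 - 1 / real (Suc j)) * real k"
            using j by (intro mult_right_mono) (auto simp: field_simps)
          show "lam * real k \<le> real (card ({n. dist ((T ^^ n) x) ((T ^^ n) y) < e} \<inter> {a..<a + k}))"
          proof -
            have "(1 - 1 / real (Suc j)) * real k \<le> real (card (S (1 / real (Suc m)) y \<inter> {a..<a+k}))"
              using N2 k by blast
            then show ?thesis using cm lm of_nat_le_iff by (smt (verit))
          qed
        qed
        then show "\<exists>N\<ge>1. \<forall>a k. N \<le> k \<longrightarrow> lam * real k \<le> real (card ({n. dist ((T ^^ n) x) ((T ^^ n) y) < e} \<inter> {a..<a + k}))"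
          using N1 by blast
      qed
    qed
  qed
  have BPm: "BP T x \<in> sets borel"
  proof -
    have "BP T x = (\<Inter>m\<in>UNIV. \<Inter>j\<in>UNIV. {y. P m j y})" unfolding BPeq by auto
    moreover have "(\<Inter>m\<in>UNIV. \<Inter>j\<in>UNIV. {y. P m j y}) \<in> sets borel"
      by (intro sets.countable_INT''[OF U]) (simp_all add: Pm)
    ultimately show ?thesis by simp
  qed
  have Tn: "(T^^n) \<in> borel_measurable borel" for n
    by (rule borel_measurable_continuous_onI[OF funpow_cont[OF assms(2)]])
  have inv: "measure \<mu> ((T^^n) -` A) = measure \<mu> A" if "A \<in> sets borel" for A n
    using that
  proof (induction n arbitrary: A)
    case 0 then show ?case by (simp add: vimage_def)
  next
    case (Suc n)
    have eq: "(T^^Suc n) -` A = T -` ((T^^n) -` A)" by (simp only: funpow_Suc_right vimage_comp)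
    have B: "(T^^n) -` A \<in> sets borel"
      using measurable_sets[OF Tn Suc.prems] by simp
    have "measure \<mu> ((T^^Suc n) -` A) = measure \<mu> (T -` ((T^^n) -` A))" by (simp only: eq)
    also have "\<dots> = measure \<mu> ((T^^n) -` A)" by (rule assms(5)[OF B])
    also have "\<dots> = measure \<mu> A" by (rule Suc.IH[OF Suc.prems])
    finally show ?case .
  qed
  have small: "measure \<mu> (BP T x) \<le> 2 * \<delta>" if dpos: "\<delta> > 0" for \<delta>
  proof -
    obtain e where e: "e > 0" "\<And>z. measure \<mu> (ball z e) \<le> \<delta>"
      using uniform_small[OF assms(1) fm assms(4) assms(6) dpos] by blast
    define E where "E n = {y. dist ((T^^n) x) ((T^^n) y) < e}" for n
    have Eeq: "E n = (T^^n) -` ball ((T^^n) x) e" for n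
      unfolding E_def by (auto simp: ball_def)
    have Es: "E n \<in> sets \<mu>" for n
    proof -
      have "E n \<in> sets borel" unfolding Eeq
        using measurable_sets[OF Tn borel_open[OF open_ball], of n "(T^^n) x" e] by simp
      then show ?thesis unfolding assms(4) .
    qed
    have Em: "measure \<mu> (E n) \<le> \<delta>" for n
      using inv[of "ball ((T^^n) x) e" n] e(2)[of "(T^^n) x"] by (simp add: Eeq)
    define D where "D k = {y. 1/2 * real k \<le> real (card (S e y \<inter> {0..<k}))}" for k
    have Ds: "D k \<in> sets \<mu>" for k
    proof -
      have "D k \<in> sets borel" unfolding D_def by (rule Sm) simp
      then show ?thesis unfolding assms(4) .
    qed
    have intE: "integrable \<mu> (indicator (E n) :: 'a \<Rightarrow> real)" for n
      by (rule integrable_real_indicator[OF Es]) (simp add: emeasure_eq_measure)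
    have Dm: "measure \<mu> (D k) \<le> 2 * \<delta>" if k: "k \<ge> 1" for k
    proof -
      have pw: "1/2 * real k * indicator (D k) y \<le> (\<Sum>n\<in>{0..<k}. indicator (E n) y)" for y
      proof (cases "y \<in> D k")
        case True
        have "real (card (S e y \<inter> {0..<k})) = (\<Sum>n\<in>{0..<k}. if dist ((T^^n) x) ((T^^n) y) < e then 1 else 0)"
          unfolding S_def by (rule card_sum) simp
        also have "\<dots> = (\<Sum>n\<in>{0..<k}. indicator (E n) y)"
          by (intro sum.cong) (auto simp: E_def indicator_def)
        finally show ?thesis using True by (simp add: D_def)
      next
        case False
        then show ?thesis by (simp add: sum_nonneg)
      qed
      have "1/2 * real k * measure \<mu> (D k) = (\<integral>y. 1/2 * real k * indicator (D k) y \<partial>\<mu>)"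
        using sp by simp
      also have "\<dots> \<le> (\<integral>y. (\<Sum>n\<in>{0..<k}. indicator (E n) y) \<partial>\<mu>)"
      proof (rule integral_mono)
        show "integrable \<mu> (\<lambda>y. \<Sum>n\<in>{0..<k}. indicator (E n) y :: real)"
          by (rule Bochner_Integration.integrable_sum) (rule intE)
        have intD: "integrable \<mu> (indicator (D k) :: 'a \<Rightarrow> real)"
          by (rule integrable_real_indicator[OF Ds]) (simp add: emeasure_eq_measure)
        show "integrable \<mu> (\<lambda>y. 1/2 * real k * indicator (D k) y :: real)"
          by (rule Bochner_Integration.integrable_mult_right) (rule intD)
        show "1/2 * real k * indicator (D k) y \<le> (\<Sum>n\<in>{0..<k}. indicator (E n) y)" for y
          by (rule pw)
      qed
      also have "\<dots> = (\<Sum>n\<in>{0..<k}. measure \<mu> (E n))"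
        by (subst Bochner_Integration.integral_sum[OF intE]) (simp add: sp)
      also have "\<dots> \<le> (\<Sum>n\<in>{0..<k}. \<delta>)" by (intro sum_mono Em)
      also have "\<dots> = real k * \<delta>" by simp
      finally have "1/2 * real k * measure \<mu> (D k) \<le> real k * \<delta>" .
      then show ?thesis using k by (simp add: field_simps)
    qed
    define C where "C N = (\<Inter>k\<in>{Suc N..}. D k)" for N
    have Cs: "C N \<in> sets \<mu>" for N
      unfolding C_def by (intro sets.countable_INT') (auto simp: Ds)
    have Cinc: "incseq C"
      unfolding C_def by (intro incseq_SucI) auto
    have CD: "measure \<mu> (C N) \<le> 2 * \<delta>" for N
    proof -
      have "C N \<subseteq> D (Suc N)" unfolding C_def by auto
      then have "measure \<mu> (C N) \<le> measure \<mu> (D (Suc N))" by (rule finite_measure_mono[OF _ Ds])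
      then show ?thesis using Dm[of "Suc N"] by simp
    qed
    have lim: "(\<lambda>N. measure \<mu> (C N)) \<longlonglongrightarrow> measure \<mu> (\<Union>N. C N)"
      by (rule finite_Lim_measure_incseq) (use Cs Cinc in auto)
    have U: "measure \<mu> (\<Union>N. C N) \<le> 2 * \<delta>"
      by (rule LIMSEQ_le_const2[OF lim]) (use CD in auto)
    have "BP T x \<subseteq> (\<Union>N. C N)"
    proof
      fix y assume "y \<in> BP T x"
      then have "banach_density_one (S e y)"
        using e(1) unfolding BP_def banach_proximal_def S_def by simp
      then have d: "\<forall>lam::real. lam < 1 \<longrightarrow> (\<exists>N::nat. N \<ge> 1 \<and> (\<forall>a k::nat. k \<ge> N \<longrightarrow>
              real (card (S e y \<inter> {a..<a+k})) \<ge> lam * real k))"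
        unfolding banach_density_one_def .
      have h: "(1/2::real) < 1" by simp
      obtain N where N1: "N \<ge> 1" and N2: "\<forall>a k::nat. k \<ge> N \<longrightarrow>
              real (card (S e y \<inter> {a..<a+k})) \<ge> 1/2 * real k"
        using d[rule_format, OF h] by blast
      have "y \<in> D k" if "k \<in> {Suc N..}" for k
      proof -
        have "N \<le> k" using that by simp
        then have "real (card (S e y \<inter> {0..<0+k})) \<ge> 1/2 * real k" using N2 by blast
        then show ?thesis unfolding D_def by simp
      qed
      then have "y \<in> C N" unfolding C_def by blast
      then show "y \<in> (\<Union>N. C N)" by blast
    qed
    then have "measure \<mu> (BP T x) \<le> measure \<mu> (\<Union>N. C N)"
      by (rule finite_measure_mono) (use Cs in auto)
    then show ?thesis using U by linarith
  qed
  have "measure \<mu> (BP T x) \<le> 0"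
  proof (rule ccontr)
    assume "\<not> measure \<mu> (BP T x) \<le> 0"
    then have pos: "measure \<mu> (BP T x) > 0" by linarith
    have "measure \<mu> (BP T x) \<le> 2 * (measure \<mu> (BP T x) / 4)"
      by (rule small) (use pos in linarith)
    then show False using pos by linarith
  qed
  then have m0: "measure \<mu> (BP T x) = 0" using measure_nonneg[of \<mu> "BP T x"] by linarith
  have "BP T x \<in> sets \<mu>" using BPm assms(4) by (simp only:)
  then show ?thesis using m0 by (rule conjI)
qed

end
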